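(* The function $v$ satisfies, and is determined by, the following conditions, valid for every integer $n\ge 0$: \begin{itemize} \item $v(0)=0$; \item $v(2n+1)=v(n)$; \item $v(4n+2)=v(2n)+v(n)+b(n)-1$; \item $v(4n+4)=v(2n+2)+v(n)+b(n)-1$. \end{itemize} Equivalently, since $a(n)=v(n)+b(n)-1$, the last two conditions read $v(4n+2)=v(2n)+a(n)$ and $v(4n+4)=v(2n+2)+a(n)$.
   Context: Let $\Sigma^*$ denote the free monoid of finite words over the alphabet $\{0,1,2\}$, with concatenation as product; the empty word is allowed. A word $x_0x_1\cdots x_k\in\Sigma^*$ with $x_0\neq 0$ is a hyperbinary expansion of the nonnegative integer $\sum_{i=0}^k x_i2^{k-i}$. The empty word is the unique hyperbinary expansion of $0$. Write $\mathcal H(n)$ for the set of hyperbinary expansions of $n$, and $b(n)=|\mathcal H(n)|$. The graph $A(n)$ is the directed graph with vertex set $\mathcal H(n)$. Its arcs are the single-step reductions between elements of $\mathcal H(n)$, each carrying one of two labels: \begin{itemize} \item pairs $(\mathbf x02\mathbf y,\mathbf x10\mathbf y)$ and $(2\mathbf y,10\mathbf y)$ are arcs labeled $\to$; \item pairs $(\mathbf x12\mathbf y,\mathbf x20\mathbf y)$ are arcs labeled $\twoheadrightarrow$; \end{itemize} here $\mathbf x,\mathbf y\in\Sigma^*$ and both words must belong to $\mathcal H(n)$. $A(n)$ is connected. Let $a(n)$ be the number of arcs of $A(n)$, and let $v(n)=a(n)-b(n)+1$ be its cyclomatic number, i.e. the cyclomatic number of the underlying undirected graph. *)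

theory Defs
  imports Main
begin

definition hval :: "nat list \<Rightarrow> nat" where
  "hval w = foldl (\<lambda>acc d. 2 * acc + d) 0 w"

definition hyperbin :: "nat \<Rightarrow> nat list set" where
  "hyperbin n = {w. set w \<subseteq> {0,1,2} \<and> (w \<noteq> [] \<longrightarrow> hd w \<noteq> 0) \<and> hval w = n}"

definition b :: "nat \<Rightarrow> nat" where
  "b n = card (hyperbin n)"

datatype arc_label = Arrow | TwoHeadArrow

definition arcs :: "nat \<Rightarrow> (arc_label \<times> nat list \<times> nat list) set" where
  "arcs n =
     {(Arrow, u, w) | u w. u \<in> hyperbin n \<and> w \<in> hyperbin n \<and>
        ((\<exists>x y. u = x @ [0,2] @ y \<and> w = x @ [1,0] @ y) \<or>
         (\<exists>y. u = 2 # y \<and> w = [1,0] @ y))}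
   \<union> {(TwoHeadArrow, u, w) | u w. u \<in> hyperbin n \<and> w \<in> hyperbin n \<and>
        (\<exists>x y. u = x @ [1,2] @ y \<and> w = x @ [2,0] @ y)}"

definition a :: "nat \<Rightarrow> nat" where
  "a n = card (arcs n)"

definition v :: "nat \<Rightarrow> int" where
  "v n = int (a n) - int (b n) + 1"

end

theory Submission
  imports Defs
begin

definition step :: "nat list \<Rightarrow> nat list \<Rightarrow> bool" where
 "step u w \<longleftrightarrow> (\<exists>x y. u = x@[0,2]@y \<and> w = x@[1,0]@y) \<or> (\<exists>y. u = 2#y \<and> w = [1,0]@y)
    \<or> (\<exists>x y. u = x@[1,2]@y \<and> w = x@[2,0]@y)"

definition succs :: "nat list \<Rightarrow> nat list set" where "succs u = {w. step u w}"

definition cross :: "nat list \<Rightarrow> nat list set" where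
 "cross p = {w. (p = [] \<and> w = [1,0]) \<or> (\<exists>x. p = x@[0] \<and> w = x@[1,0]) \<or> (\<exists>x. p = x@[1] \<and> w = x@[2,0])}"

lemma hval_snoc[simp]: "hval (p@[d]) = 2 * hval p + d" by (simp add: hval_def)
lemma hval_Nil[simp]: "hval [] = 0" by (simp add: hval_def)

lemma foldl_gen: "foldl (\<lambda>acc d. 2*acc+d) c ys = c * 2^length ys + foldl (\<lambda>acc d. 2*acc+d) (0::nat) ys"
proof (induction ys arbitrary: c)
  case Nil then show ?case by simp
next
  case (Cons y ys)
  have "foldl (\<lambda>acc d. 2*acc+d) c (y#ys) = (2*c+y) * 2^length ys + foldl (\<lambda>acc d. 2*acc+d) 0 ys"
    using Cons.IH[of "2*c+y"] by simp
  moreover have "foldl (\<lambda>acc d. 2*acc+d) 0 (y#ys) = y * 2^length ys + foldl (\<lambda>acc d. 2*acc+d) 0 ys"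
    using Cons.IH[of y] by simp
  ultimately show ?case by (simp add: algebra_simps)
qed

lemma hval_append: "hval (xs@ys) = hval xs * 2^length ys + hval ys"
  unfolding hval_def by (subst foldl_append, rule foldl_gen)

lemma mem_H: "p \<in> hyperbin m \<longleftrightarrow> set p \<subseteq> {0,1,2} \<and> (p \<noteq> [] \<longrightarrow> hd p \<noteq> 0) \<and> hval p = m"
  by (auto simp: hyperbin_def)

lemma mem_H_snoc: "p@[d] \<in> hyperbin n \<longleftrightarrow> d \<in> {0,1,2} \<and> 2*hval p + d = n \<and> set p \<subseteq> {0,1,2}
     \<and> (p \<noteq> [] \<longrightarrow> hd p \<noteq> 0) \<and> (p = [] \<longrightarrow> d \<noteq> 0)"
  by (auto simp: hyperbin_def hd_append)

lemma hval_zero: "hval w = 0 \<Longrightarrow> \<forall>d\<in>set w. d = 0"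
  by (induction w rule: rev_induct) auto

lemma H0: "hyperbin 0 = {[]}"
proof -
  { fix w assume w: "w \<in> hyperbin 0" "w \<noteq> []"
    then have "hd w = 0" using hval_zero[of w] by (auto simp: mem_H)
    with w have False by (auto simp: mem_H) }
  moreover have "[] \<in> hyperbin 0" by (simp add: mem_H)
  ultimately show ?thesis by blast
qed

lemma H_odd: "hyperbin (2*m+1) = (\<lambda>p. p@[1]) ` hyperbin m"
proof (rule set_eqI)
  fix w show "w \<in> hyperbin (2*m+1) \<longleftrightarrow> w \<in> (\<lambda>p. p@[1]) ` hyperbin m"
  proof (cases w rule: rev_exhaust)
    case Nil then show ?thesis by (auto simp: mem_H)
  next
    case (snoc p d)
    have "p@[d] \<in> hyperbin (2*m+1) \<longleftrightarrow> d = 1 \<and> p \<in> hyperbin m"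
      by (subst mem_H_snoc) (auto simp: mem_H; presburger)
    then show ?thesis using snoc by auto
  qed
qed

lemma H_even: "hyperbin (2*m+2) = (\<lambda>p. p@[0]) ` hyperbin (m+1) \<union> (\<lambda>p. p@[2]) ` hyperbin m"
proof (rule set_eqI)
  fix w show "w \<in> hyperbin (2*m+2) \<longleftrightarrow> w \<in> (\<lambda>p. p@[0]) ` hyperbin (m+1) \<union> (\<lambda>p. p@[2]) ` hyperbin m"
  proof (cases w rule: rev_exhaust)
    case Nil then show ?thesis by (auto simp: mem_H)
  next
    case (snoc p d)
    have "p@[d] \<in> hyperbin (2*m+2) \<longleftrightarrow> (d = 0 \<and> p \<in> hyperbin (m+1)) \<or> (d = 2 \<and> p \<in> hyperbin m)"
      by (subst mem_H_snoc) (auto simp: mem_H; presburger)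
    then show ?thesis using snoc by auto
  qed
qed

lemma parity_cases: fixes n :: nat obtains "n = 0" | m where "n = 2*m+1" | m where "n = 2*m+2"
proof -
  have "n = 0 \<or> (\<exists>m. n = 2*m+1) \<or> (\<exists>m. n = 2*m+2)" by presburger
  then show thesis using that by blast
qed

lemma finite_H: "finite (hyperbin n)"
proof (induction n rule: less_induct)
  case (less n)
  show ?case
  proof (cases n rule: parity_cases)
    case 1 then show ?thesis by (simp add: H0)
  next
    case (2 m) then show ?thesis using less[of m] unfolding 2 H_odd by simp
  next
    case (3 m) then show ?thesis using less[of m] less[of "m+1"] unfolding 3 H_even by simp
  qed
qed

lemma step_last:
  assumes "step (p@[d]) w"
  shows "(\<exists>q. w = q@[d] \<and> step p q) \<or> (d = 2 \<and> w \<in> cross p)"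
proof -
  consider (A) x y where "p @ [d] = x @ [0, 2] @ y" "w = x @ [1, 0] @ y"
    | (B) y where "p @ [d] = 2 # y" "w = [1, 0] @ y"
    | (C) x y where "p @ [d] = x @ [1, 2] @ y" "w = x @ [2, 0] @ y"
    using assms unfolding step_def by blast
  then show ?thesis
  proof cases
  case (A x y) note u = A(1) and w = A(2)
  show ?thesis
  proof (cases y rule: rev_exhaust)
    case Nil
    then have "p @ [d] = (x @ [0]) @ [2]" using u by simp
    then have "p = x@[0]" "d = 2" by auto
    then show ?thesis using w Nil by (auto simp: cross_def)
  next
    case (snoc y' e)
    then have "p @ [d] = (x @ [0, 2] @ y') @ [e]" using u by simp
    then have "p = x @ [0, 2] @ y'" "d = e" by auto
    then show ?thesis using w snoc unfolding step_def by auto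
  qed
next
  case (B y) note u = B(1) and w = B(2)
  show ?thesis
  proof (cases y rule: rev_exhaust)
    case Nil
    then have "p = []" "d = 2" using u by (cases p; simp)+
    then show ?thesis using w Nil by (auto simp: cross_def)
  next
    case (snoc y' e)
    then have "p @ [d] = (2 # y') @ [e]" using u by simp
    then have "p = 2 # y'" "d = e" by auto
    then show ?thesis using w snoc unfolding step_def by auto
  qed
next
  case (C x y) note u = C(1) and w = C(2)
  show ?thesis
  proof (cases y rule: rev_exhaust)
    case Nil
    then have "p @ [d] = (x @ [1]) @ [2]" using u by simp
    then have "p = x@[1]" "d = 2" by auto
    then show ?thesis using w Nil by (auto simp: cross_def)
  next
    case (snoc y' e)
    then have "p @ [d] = (x @ [1, 2] @ y') @ [e]" using u by simp
    then have "p = x @ [1, 2] @ y'" "d = e" by auto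
    then show ?thesis using w snoc unfolding step_def by auto
  qed
  qed
qed

lemma step_snoc: "step p q \<Longrightarrow> step (p@[d]) (q@[d])"
  unfolding step_def by (elim disjE exE conjE) (metis append.assoc append_Cons)+

lemma cross_step: "w \<in> cross p \<Longrightarrow> step (p@[2]) w"
  unfolding cross_def step_def
  apply (elim CollectE disjE exE conjE)
    apply (rule disjI2, rule disjI1, simp)
   apply (rule disjI1, rule_tac x=x in exI, rule_tac x="[]" in exI, simp)
  apply (rule disjI2, rule disjI2, rule_tac x=x in exI, rule_tac x="[]" in exI, simp)
  done

lemma cross_last: "w \<in> cross p \<Longrightarrow> w \<noteq> q@[d] \<or> d = 0"
  unfolding cross_def by auto

lemma succs_snoc: "d \<noteq> 2 \<Longrightarrow> succs (p@[d]) = (\<lambda>q. q@[d]) ` succs p"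
  unfolding succs_def using step_last[of p d] step_snoc[of p _ d] by auto

lemma succs_snoc2: "succs (p@[2]) = (\<lambda>q. q@[2]) ` succs p \<union> cross p"
  unfolding succs_def using step_last[of p 2] step_snoc[of p _ 2] cross_step[of _ p] by auto

lemma succs_snoc_sub: "succs (p@[d]) \<subseteq> (\<lambda>q. q@[d]) ` succs p \<union> cross p"
  unfolding succs_def using step_last[of p d] by auto

lemma cross_Nil: "cross [] = {[1,0]}" unfolding cross_def by auto
lemma cross_0: "cross (x@[0]) = {x@[1,0]}" unfolding cross_def by auto
lemma cross_1: "cross (x@[1]) = {x@[2,0]}" unfolding cross_def by auto
lemma cross_2: "cross (x@[2]) = {}" unfolding cross_def by auto

lemma cross_1': "cross (x@[Suc 0]) = {x@[2,0]}" unfolding cross_def by auto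

lemma finite_cross: "finite (cross p)"
  by (rule finite_subset[of _ "{[1,0], butlast p @ [1,0], butlast p @ [2,0]}"]) (auto simp: cross_def)

lemma finite_succs: "finite (succs p)"
proof (induction p rule: rev_induct)
  case Nil
  have "succs [] = {}" unfolding succs_def step_def by auto
  then show ?case by simp
next
  case (snoc d p)
  show ?case by (rule finite_subset[OF succs_snoc_sub]) (use snoc finite_cross in auto)
qed

lemma od_snoc: "d \<noteq> 2 \<Longrightarrow> card (succs (p@[d])) = card (succs p)"
  by (simp add: succs_snoc card_image inj_on_def)

lemma od_snoc2: "card (succs (p@[2])) = card (succs p) + card (cross p)"
proof -
  have "(\<lambda>q. q@[2]) ` succs p \<inter> cross p = {}" using cross_last by fastforce
  then show ?thesis unfolding succs_snoc2
    by (simp add: card_Un_disjoint finite_succs finite_cross card_image inj_on_def)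
qed

lemma hval_Cons[simp]: "hval (x#xs) = x * 2^length xs + hval xs"
  using hval_append[of "[x]" xs] by (simp add: hval_def)

lemma hd_app: "x \<noteq> [] \<Longrightarrow> hd (x @ ys) = hd x" by simp

lemma step_H:
  assumes u: "u \<in> hyperbin n" and st: "step u w"
  shows "w \<in> hyperbin n"
proof -
  consider (A) x y where "u = x @ [0, 2] @ y" "w = x @ [1, 0] @ y"
    | (B) y where "u = 2 # y" "w = [1, 0] @ y"
    | (C) x y where "u = x @ [1, 2] @ y" "w = x @ [2, 0] @ y"
    using st unfolding step_def by blast
  then show ?thesis
  proof cases
    case (A x y)
    have "x \<noteq> []" using u A by (auto simp: mem_H)
    then show ?thesis using u A by (auto simp: mem_H hval_append)
  next
    case (B y)
    then show ?thesis using u by (auto simp: mem_H hval_append)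
  next
    case (C x y)
    show ?thesis
    proof (cases "x = []")
      case True then show ?thesis using u C by (auto simp: mem_H hval_append)
    next
      case False then show ?thesis using u C by (auto simp: mem_H hval_append)
    qed
  qed
qed

definition sq :: "nat list \<Rightarrow> nat" where "sq u = sum_list (map (\<lambda>d. d*d) u)"

lemma label_disj:
  fixes u w :: "nat list"
  assumes "\<exists>x y. u = x@[1,2]@y \<and> w = x@[2,0]@y"
    and "(\<exists>x y. u = x@[0,2]@y \<and> w = x@[1,0]@y) \<or> (\<exists>y. u = 2#y \<and> w = [1,0]@y)"
  shows False
proof -
  from assms(1) have "sq u = sq w + 1" by (auto simp: sq_def)
  moreover from assms(2) have "sq u = sq w + 3" by (auto simp: sq_def)
  ultimately show False by simp
qed

lemma arcs_pairs: "snd ` arcs n = {(u,w). u \<in> hyperbin n \<and> w \<in> hyperbin n \<and> step u w}"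
proof
  show "snd ` arcs n \<subseteq> {(u,w). u \<in> hyperbin n \<and> w \<in> hyperbin n \<and> step u w}"
  proof
    fix z assume "z \<in> snd ` arcs n"
    then obtain l u w where t: "(l,u,w) \<in> arcs n" "z = (u,w)" by force
    then have "u \<in> hyperbin n \<and> w \<in> hyperbin n \<and> step u w"
      unfolding arcs_def step_def by (auto; blast)
    then show "z \<in> {(u,w). u \<in> hyperbin n \<and> w \<in> hyperbin n \<and> step u w}" using t by simp
  qed
next
  show "{(u,w). u \<in> hyperbin n \<and> w \<in> hyperbin n \<and> step u w} \<subseteq> snd ` arcs n"
  proof clarify
    fix u w assume h: "u \<in> hyperbin n" "w \<in> hyperbin n" "step u w"
    show "(u, w) \<in> snd ` arcs n"
    proof (cases "\<exists>x y. u = x@[1,2]@y \<and> w = x@[2,0]@y")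
      case True
      then have "(TwoHeadArrow, u, w) \<in> arcs n" using h unfolding arcs_def by blast
      then show ?thesis by force
    next
      case False
      then have "(Arrow, u, w) \<in> arcs n" using h unfolding arcs_def step_def by blast
      then show ?thesis by force
    qed
  qed
qed

lemma arcs_inj: "inj_on snd (arcs n)"
proof (rule inj_onI)
  fix p q assume p: "p \<in> arcs n" and q: "q \<in> arcs n" and e: "snd p = snd q"
  obtain l1 u w where p': "p = (l1, u, w)" by (cases p) auto
  obtain l2 u' w' where q': "q = (l2, u', w')" by (cases q) auto
  have uw: "u' = u" "w' = w" using e p' q' by auto
  show "p = q"
  proof (cases "l1 = l2")
    case True then show ?thesis using p' q' uw by simp
  next
    case False
    then show ?thesis using p q p' q' uw label_disj[of u w] unfolding arcs_def
      by (cases l1; cases l2) auto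
  qed
qed

lemma a_sum: "a n = (\<Sum>u\<in>hyperbin n. card (succs u))"
proof -
  have "a n = card {(u,w). u \<in> hyperbin n \<and> w \<in> hyperbin n \<and> step u w}"
    unfolding a_def arcs_pairs[symmetric] by (simp add: card_image arcs_inj)
  also have "{(u,w). u \<in> hyperbin n \<and> w \<in> hyperbin n \<and> step u w} = Sigma (hyperbin n) succs"
    using step_H unfolding succs_def by auto
  also have "card (Sigma (hyperbin n) succs) = (\<Sum>u\<in>hyperbin n. card (succs u))"
    by (rule card_SigmaI) (simp_all add: finite_H finite_succs)
  finally show ?thesis .
qed

lemma inj_snoc: "inj_on (\<lambda>p. p@[d]) A" by (simp add: inj_on_def)

lemma disj_img: "(\<lambda>p::nat list. p@[0]) ` A \<inter> (\<lambda>p. p@[2]) ` B = {}" by auto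

lemma b_odd: "b (2*m+1) = b m"
  unfolding b_def H_odd by (simp add: card_image inj_snoc)

lemma b_even: "b (2*m+2) = b (m+1) + b m"
  unfolding b_def H_even
  by (simp add: card_Un_disjoint finite_H disj_img card_image inj_snoc)

lemma a_odd: "a (2*m+1) = a m"
  unfolding a_sum H_odd by (simp add: sum.reindex inj_snoc od_snoc)

lemma a_even: "a (2*m+2) = a (m+1) + a m + (\<Sum>q\<in>hyperbin m. card (cross q))"
proof -
  have "a (2*m+2) = (\<Sum>u\<in>(\<lambda>p. p@[0]) ` hyperbin (m+1). card (succs u))
      + (\<Sum>u\<in>(\<lambda>p. p@[2]) ` hyperbin m. card (succs u))"
    unfolding a_sum H_even by (rule sum.union_disjoint) (simp_all add: finite_H disj_img)
  also have "\<dots> = (\<Sum>p\<in>hyperbin (m+1). card (succs p)) + (\<Sum>p\<in>hyperbin m. card (succs p) + card (cross p))"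
    by (simp add: sum.reindex inj_snoc od_snoc od_snoc2)
  finally show ?thesis by (simp add: sum.distrib a_sum)
qed

lemma cross_sum: "(\<Sum>q\<in>hyperbin m. card (cross q)) = b (m div 2)"
proof (cases m rule: parity_cases)
  case 1 then show ?thesis by (simp add: H0 cross_Nil b_def)
next
  case (2 k)
  have "(\<Sum>q\<in>hyperbin m. card (cross q)) = (\<Sum>q\<in>hyperbin k. card (cross (q@[1])))"
    unfolding 2 H_odd by (simp add: sum.reindex inj_snoc)
  also have "\<dots> = b k" by (simp add: cross_1' b_def)
  finally show ?thesis using 2 by simp
next
  case (3 k)
  have "(\<Sum>q\<in>hyperbin m. card (cross q)) = (\<Sum>q\<in>hyperbin (k+1). card (cross (q@[0])))
     + (\<Sum>q\<in>hyperbin k. card (cross (q@[2])))"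
    unfolding 3 H_even
    by (subst sum.union_disjoint) (simp_all add: finite_H disj_img sum.reindex inj_snoc)
  also have "\<dots> = b (k+1)" by (simp add: cross_0 cross_2 b_def)
  finally show ?thesis using 3 by simp
qed

lemma a_odd': "a (Suc (2*m)) = a m" using a_odd[of m] by simp
lemma b_odd': "b (Suc (2*m)) = b m" using b_odd[of m] by simp

lemma a_4n2: "a (4*n+2) = a (2*n) + a n + b n"
proof -
  have "a (4*n+2) = a (2*(2*n)+2)" by simp
  also have "\<dots> = a (2*n+1) + a (2*n) + b n" unfolding a_even cross_sum by simp
  finally show ?thesis by (simp add: a_odd')
qed

lemma a_4n4: "a (4*n+4) = a (2*n+2) + a n + b n"
proof -
  have e: "4*n+4 = 2*(2*n+1)+2" by simp
  have "a (4*n+4) = a (2*(2*n+1)+2)" unfolding e ..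
  also have "\<dots> = a (2*n+2) + a (2*n+1) + b n"
    using a_even[of "2*n+1"] cross_sum[of "2*n+1"] by simp
  finally show ?thesis by (simp add: a_odd')
qed

lemma b_4n2: "b (4*n+2) = b (2*n) + b n"
proof -
  have "b (4*n+2) = b (2*(2*n)+2)" by simp
  also have "\<dots> = b (2*n) + b n" unfolding b_even by (simp add: b_odd')
  finally show ?thesis .
qed

lemma b_4n4: "b (4*n+4) = b (2*n+2) + b n"
proof -
  have e: "4*n+4 = 2*(2*n+1)+2" by simp
  have "b (4*n+4) = b (2*(2*n+1)+2)" unfolding e ..
  also have "\<dots> = b (2*n+2) + b n" using b_even[of "2*n+1"] b_odd'[of n] by simp
  finally show ?thesis .
qed

lemma v0: "v 0 = 0"
proof -
  have "b 0 = 1" by (simp add: b_def H0)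
  moreover have "a 0 = 0" by (simp add: a_sum H0 succs_def step_def)
  ultimately show ?thesis by (simp add: v_def)
qed

lemma v_odd: "v (2*n+1) = v n"
  unfolding v_def using a_odd[of n] b_odd[of n] by simp

lemma v_4n2: "v (4*n+2) = v (2*n) + v n + int (b n) - 1"
  unfolding v_def using a_4n2[of n] b_4n2[of n] by simp

lemma v_4n4: "v (4*n+4) = v (2*n+2) + v n + int (b n) - 1"
  unfolding v_def using a_4n4[of n] b_4n4[of n] by simp

theorem mainTheorem1:
  shows "(v 0 = 0 \<and>
          (\<forall>n. v (2*n+1) = v n) \<and>
          (\<forall>n. v (4*n+2) = v (2*n) + v n + int (b n) - 1) \<and>
          (\<forall>n. v (4*n+4) = v (2*n+2) + v n + int (b n) - 1)) \<and>
         (\<forall>f :: nat \<Rightarrow> int.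
            (f 0 = 0 \<and>
             (\<forall>n. f (2*n+1) = f n) \<and>
             (\<forall>n. f (4*n+2) = f (2*n) + f n + int (b n) - 1) \<and>
             (\<forall>n. f (4*n+4) = f (2*n+2) + f n + int (b n) - 1))
            \<longrightarrow> f = v)"
proof (intro conjI allI impI)
  show "v 0 = 0" by (rule v0)
  show "\<And>n. v (2*n+1) = v n" by (rule v_odd)
  show "\<And>n. v (4*n+2) = v (2*n) + v n + int (b n) - 1" by (rule v_4n2)
  show "\<And>n. v (4*n+4) = v (2*n+2) + v n + int (b n) - 1" by (rule v_4n4)
next
  fix f :: "nat \<Rightarrow> int"
  assume h: "f 0 = 0 \<and>
             (\<forall>n. f (2*n+1) = f n) \<and>
             (\<forall>n. f (4*n+2) = f (2*n) + f n + int (b n) - 1) \<and>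
             (\<forall>n. f (4*n+4) = f (2*n+2) + f n + int (b n) - 1)"
  have "f n = v n" for n
  proof (induction n rule: less_induct)
    case (less n)
    have "n = 0 \<or> (\<exists>m. n = 2*m+1) \<or> (\<exists>m. n = 4*m+2) \<or> (\<exists>m. n = 4*m+4)" by presburger
    then show ?case
    proof (elim disjE exE)
      assume "n = 0" then show ?thesis using h v0 by simp
    next
      fix m assume n: "n = 2*m+1"
      then show ?thesis using h v_odd less[of m] by simp
    next
      fix m assume n: "n = 4*m+2"
      then show ?thesis using h v_4n2 less[of m] less[of "2*m"] by simp
    next
      fix m assume n: "n = 4*m+4"
      then show ?thesis using h v_4n4 less[of m] less[of "2*m+2"] by simp
    qed
  qed
  then show "f = v" by auto
qed

end
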